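(* Let $p\ge2$ and $n,\ell,t$ be positive integers. Every $t$-tandem-duplication-correcting code $\mathcal{C}\subseteq\mathbb{Z}_p^n$ with respect to duplication length $\ell$ satisfies $$|\mathcal{C}|\le p^{\ell}\sum_{w=0}^{\lfloor n/\ell\rfloor-1}\ \sum_{r=0}^{n-(w+1)\ell}N_{p,\ell}\bigl(n-(w+1)\ell,r\bigr)\frac{\binom{r+w+t}{w+t}}{\binom{r+t}{t}}.$$
   Context: $\mathbb{Z}_p=\{0,1,\dots,p-1\}$. For a word $\mathbf{x}$ over $\mathbb{Z}_p$ and $0\le i\le|\mathbf{x}|-\ell$, write $\mathbf{x}=\mathbf{u}\mathbf{v}\mathbf{w}$ with $|\mathbf{u}|=i$, $|\mathbf{v}|=\ell$; the tandem duplication of length $\ell$ at position $i$ produces $\mathbf{u}\mathbf{v}\mathbf{v}\mathbf{w}$. The ball $B_t^{\tau_\ell}(\mathbf{x})$ is the set of words obtainable from $\mathbf{x}$ by at most $t$ successive tandem duplications of length $\ell$. A code $\mathcal{C}\subseteq\mathbb{Z}_p^n$ is $t$-tandem-duplication-correcting (duplication length $\ell$) if $B_t^{\tau_\ell}(\mathbf{c})\cap B_t^{\tau_\ell}(\mathbf{c}')=\emptyset$ for all distinct $\mathbf{c},\mathbf{c}'\in\mathcal{C}$. $N_{p,\ell}(m,r)$ denotes the number of words in $\mathbb{Z}_p^m$ of Hamming weight $r$ that contain no $\ell$ consecutive zeros. *)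

theory Defs
  imports Complex_Main
begin

definition words :: "nat \<Rightarrow> nat \<Rightarrow> nat list set" where
  "words p n = {x. length x = n \<and> set x \<subseteq> {..<p}}"

text \<open>Tandem duplication of length l at position i: x = u v w with |u| = i, |v| = l
  gives u v v w, i.e. take (i+l) x @ drop i x.\<close>
definition tdup :: "nat \<Rightarrow> nat \<Rightarrow> nat list \<Rightarrow> nat list" where
  "tdup l i x = take (i + l) x @ drop i x"

definition dup_step :: "nat \<Rightarrow> nat list \<Rightarrow> nat list \<Rightarrow> bool" where
  "dup_step l x y \<longleftrightarrow> (\<exists>i. i + l \<le> length x \<and> y = tdup l i x)"

definition dup_ball :: "nat \<Rightarrow> nat \<Rightarrow> nat list \<Rightarrow> nat list set" where
  "dup_ball l t x = {y. \<exists>k\<le>t. (dup_step l ^^ k) x y}"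

definition tdc_code :: "nat \<Rightarrow> nat \<Rightarrow> nat \<Rightarrow> nat \<Rightarrow> nat list set \<Rightarrow> bool" where
  "tdc_code p n l t C \<longleftrightarrow> C \<subseteq> words p n \<and>
     (\<forall>c\<in>C. \<forall>c'\<in>C. c \<noteq> c' \<longrightarrow> dup_ball l t c \<inter> dup_ball l t c' = {})"

definition hweight :: "nat list \<Rightarrow> nat" where
  "hweight x = length (filter (\<lambda>a. a \<noteq> 0) x)"

definition no_zero_run :: "nat \<Rightarrow> nat list \<Rightarrow> bool" where
  "no_zero_run l x \<longleftrightarrow> \<not> (\<exists>i. i + l \<le> length x \<and> (\<forall>j<l. x ! (i + j) = 0))"

definition N_count :: "nat \<Rightarrow> nat \<Rightarrow> nat \<Rightarrow> nat \<Rightarrow> nat" where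
  "N_count p l m r = card {x \<in> words p m. hweight x = r \<and> no_zero_run l x}"

end

theory Submission
  imports Defs
begin


fun gaps :: "nat list \<Rightarrow> nat list" where
  "gaps [] = [0]"
| "gaps (a # s) = (if a = 0 then (hd (gaps s) + 1) # tl (gaps s) else 0 # gaps s)"

definition nz :: "nat list \<Rightarrow> nat list" where "nz s = filter (\<lambda>a. a \<noteq> 0) s"

fun build :: "nat list \<Rightarrow> nat list \<Rightarrow> nat list" where
  "build [] gs = replicate (hd gs) 0"
| "build (a # as) gs = replicate (hd gs) 0 @ a # build as (tl gs)"

definition ins :: "nat \<Rightarrow> nat \<Rightarrow> nat list \<Rightarrow> nat list" where
  "ins l i s = take i s @ replicate l 0 @ drop i s"

lemma gaps_ne[simp]: "gaps s \<noteq> []"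
  by (induction s) auto

lemma length_gaps: "length (gaps s) = length (nz s) + 1"
  by (induction s) (auto simp: nz_def)

lemma gaps_rep: "gaps (replicate m 0 @ s) = (hd (gaps s) + m) # tl (gaps s)"
  by (induction m) auto

lemma build_gaps: "build (nz s) (gaps s) = s"
proof (induction s)
  case Nil then show ?case by (simp add: nz_def)
next
  case (Cons a s)
  show ?case
  proof (cases "a = 0")
    case True
    obtain g gs where g: "gaps s = g # gs" by (cases "gaps s") auto
    have "build (nz s) (g # gs) = s" using Cons g by simp
    then show ?thesis using True g
      by (cases "nz s") (auto simp: nz_def)
  next
    case False then show ?thesis using Cons by (simp add: nz_def)
  qed
qed

lemma nz_build: "\<forall>a\<in>set as. a \<noteq> 0 \<Longrightarrow> nz (build as gs) = as"
  by (induction as arbitrary: gs) (auto simp: nz_def)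

lemma gaps_build: "\<forall>a\<in>set as. a \<noteq> 0 \<Longrightarrow> length gs = length as + 1 \<Longrightarrow> gaps (build as gs) = gs"
proof (induction as arbitrary: gs)
  case Nil
  then obtain g where "gs = [g]" by (cases gs) auto
  then show ?case using gaps_rep[of g "[]"] by simp
next
  case (Cons a as)
  then obtain g gs' where gs: "gs = g # gs'" by (cases gs) auto
  then show ?case using Cons gaps_rep[of g "a # build as gs'"] by simp
qed

lemma nz_nonzero: "\<forall>a\<in>set (nz s). a \<noteq> 0" by (simp add: nz_def)

lemma gaps_nz_inj: "nz s = nz s' \<Longrightarrow> gaps s = gaps s' \<Longrightarrow> s = s'"
  by (metis build_gaps)

lemma length_build: "length gs = length as + 1 \<Longrightarrow> length (build as gs) = length as + sum_list gs"
proof (induction as arbitrary: gs)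
  case Nil then show ?case by (cases gs) auto
next
  case (Cons a as) then show ?case by (cases gs) auto
qed

lemma length_eq_gaps: "length s = length (nz s) + sum_list (gaps s)"
  by (metis build_gaps length_build length_gaps)

lemma set_build: "set (build as gs) \<subseteq> set as \<union> {0}"
  by (induction as arbitrary: gs) auto

lemma nz_ins: "nz (ins l i s) = nz s"
proof -
  have "filter (\<lambda>a. a \<noteq> 0) (replicate l (0::nat)) = []" by (induction l) auto
  then show ?thesis unfolding nz_def ins_def
    by (metis append_Nil append_take_drop_id filter_append)
qed

lemma gaps_ins: "k < length (gaps s) \<Longrightarrow> \<exists>i\<le>length s. gaps (ins l i s) = (gaps s)[k := gaps s ! k + l]"
proof (induction s arbitrary: k)
  case Nil
  then show ?case by (auto simp: ins_def gaps_rep[of l "[]", simplified])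
next
  case (Cons a s)
  obtain g gs where g: "gaps s = g # gs" by (cases "gaps s") auto
  show ?case
  proof (cases k)
    case 0
    then have "gaps (ins l 0 (a # s)) = (gaps (a # s))[k := gaps (a # s) ! k + l]"
      using gaps_rep[of l "a # s"] by (simp add: ins_def)
    then show ?thesis by blast
  next
    case (Suc k')
    show ?thesis
    proof (cases "a = 0")
      case True
      have "k < length (gaps s)" using Cons.prems True g by simp
      then obtain i where i: "i \<le> length s" "gaps (ins l i s) = (gaps s)[k := gaps s ! k + l]"
        using Cons.IH by blast
      have "ins l (Suc i) (a # s) = a # ins l i s" by (simp add: ins_def)
      then have "gaps (ins l (Suc i) (a # s)) = (gaps (a # s))[k := gaps (a # s) ! k + l]"
        using i True g Suc by simp
      then show ?thesis using i by (intro exI[of _ "Suc i"]) simp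
    next
      case False
      have "k' < length (gaps s)" using Cons.prems False Suc by simp
      then obtain i where i: "i \<le> length s" "gaps (ins l i s) = (gaps s)[k' := gaps s ! k' + l]"
        using Cons.IH by blast
      have "ins l (Suc i) (a # s) = a # ins l i s" by (simp add: ins_def)
      then have "gaps (ins l (Suc i) (a # s)) = (gaps (a # s))[k := gaps (a # s) ! k + l]"
        using i False Suc by simp
      then show ?thesis using i by (intro exI[of _ "Suc i"]) simp
    qed
  qed
qed

lemma lead_zeros: "l \<le> length x \<Longrightarrow> \<forall>j<l. x ! j = 0 \<Longrightarrow> l \<le> hd (gaps x)"
proof (induction l arbitrary: x)
  case 0 then show ?case by simp
next
  case (Suc l)
  then obtain x' where x: "x = 0 # x'" by (cases x) auto
  have "\<forall>j<l. x' ! j = 0" using Suc.prems x by (metis Suc_mono nth_Cons_Suc)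
  then have "l \<le> hd (gaps x')" using Suc.IH[of x'] Suc.prems x by auto
  then show ?case using x by simp
qed

lemma no_zero_run_gaps: "0 < l \<Longrightarrow> \<forall>g\<in>set (gaps x). g < l \<Longrightarrow> no_zero_run l x"
proof (induction x)
  case Nil then show ?case by (simp add: no_zero_run_def)
next
  case (Cons a x)
  obtain g gs where g: "gaps x = g # gs" by (cases "gaps x") auto
  have sub: "\<forall>g\<in>set (gaps x). g < l"
    using Cons.prems g by (auto split: if_splits)
  have IH: "no_zero_run l x" using Cons.IH Cons.prems(1) sub by blast
  show ?case unfolding no_zero_run_def
  proof
    assume "\<exists>i. i + l \<le> length (a # x) \<and> (\<forall>j<l. (a # x) ! (i + j) = 0)"
    then obtain i where i: "i + l \<le> length (a # x)" "\<forall>j<l. (a # x) ! (i + j) = 0" by blast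
    show False
    proof (cases i)
      case 0
      then have "l \<le> hd (gaps (a # x))" using lead_zeros[of l "a # x"] i by simp
      moreover have "hd (gaps (a # x)) < l" using Cons.prems(2) by (metis gaps_ne list.set_sel(1))
      ultimately show False by simp
    next
      case (Suc i')
      then have "i' + l \<le> length x" "\<forall>j<l. x ! (i' + j) = 0" using i by auto
      then show False using IH unfolding no_zero_run_def by blast
    qed
  qed
qed



definition dd :: "nat \<Rightarrow> nat \<Rightarrow> nat list \<Rightarrow> nat list" where
  "dd p l x = map (\<lambda>j. (x ! (j + l) + (p - x ! j)) mod p) [0..<length x - l]"

lemma length_dd[simp]: "length (dd p l x) = length x - l"
  by (simp add: dd_def)

lemma nth_dd: "j < length x - l \<Longrightarrow> dd p l x ! j = (x ! (j + l) + (p - x ! j)) mod p"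
  by (simp add: dd_def)

lemma length_tdup[simp]: "i + l \<le> length x \<Longrightarrow> length (tdup l i x) = length x + l"
  by (simp add: tdup_def)

lemma nth_tdup: "i + l \<le> length x \<Longrightarrow> j < length x + l \<Longrightarrow>
   tdup l i x ! j = (if j < i + l then x ! j else x ! (j - l))"
  by (auto simp: tdup_def nth_append min_def)

lemma set_tdup: "set (tdup l i x) \<subseteq> set x"
  unfolding tdup_def by (auto dest: in_set_takeD in_set_dropD)

lemma take_tdup: "i + l \<le> length x \<Longrightarrow> take l (tdup l i x) = take l x"
  unfolding tdup_def by (simp add: min_def)

lemma dd_tdup:
  assumes "i + l \<le> length x" "set x \<subseteq> {..<p}"
  shows "dd p l (tdup l i x) = ins l i (dd p l x)"
proof (rule nth_equalityI)
  show "length (dd p l (tdup l i x)) = length (ins l i (dd p l x))"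
    using assms by (simp add: ins_def)
  fix j assume j: "j < length (dd p l (tdup l i x))"
  then have j': "j < length x" using assms by simp
  have lhs: "dd p l (tdup l i x) ! j = (tdup l i x ! (j + l) + (p - tdup l i x ! j)) mod p"
    using j assms by (simp add: nth_dd)
  have xlt: "x ! j < p" using j' assms by (meson lessThan_iff nth_mem subsetD)
  consider "j < i" | "i \<le> j \<and> j < i + l" | "i + l \<le> j" by linarith
  then show "dd p l (tdup l i x) ! j = ins l i (dd p l x) ! j"
  proof cases
    case 1
    then show ?thesis using lhs assms j' by (simp add: nth_tdup ins_def nth_append nth_dd min_def)
  next
    case 2
    then have "dd p l (tdup l i x) ! j = (x ! j + (p - x ! j)) mod p"
      using lhs assms j' by (simp add: nth_tdup)
    also have "\<dots> = 0" using xlt by simp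
    moreover have "ins l i (dd p l x) ! j = 0"
    proof -
      have li: "length (take i (dd p l x)) = i" using assms(1) by simp
      have "ins l i (dd p l x) ! j = (replicate l 0 @ drop i (dd p l x)) ! (j - i)"
        unfolding ins_def using li 2 by (simp add: nth_append)
      also have "\<dots> = 0" using 2 by (subst nth_append) auto
      finally show ?thesis .
    qed
    ultimately show ?thesis by simp
  next
    case 3
    then show ?thesis using lhs assms j' by (simp add: nth_tdup ins_def nth_append nth_dd min_def)
  qed
qed

lemma mod_aux: "a < p \<Longrightarrow> c \<le> p \<Longrightarrow> (a + (p - c)) mod p = (if c \<le> a then a - c else a + (p - c))"
  for a c p :: nat
proof (cases "c \<le> a")
  case True
  assume "a < p" "c \<le> p"
  then have eq: "a + (p - c) = (a - c) + p" using True by simp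
  have "(a + (p - c)) mod p = ((a - c) + p) mod p" by (simp only: eq)
  also have "\<dots> = a - c" using \<open>a < p\<close> by simp
  finally show ?thesis using True by simp
next
  case False
  assume "a < p" "c \<le> p"
  then show ?thesis using False by simp
qed

lemma mod_cancel_aux:
  fixes a b c p :: nat
  assumes "a < p" "b < p" "c \<le> p" "(a + (p - c)) mod p = (b + (p - c)) mod p"
  shows "a = b"
  using assms mod_aux[of a p c] mod_aux[of b p c] by (auto split: if_splits)

lemma dd_inj:
  assumes "0 < l" "length x = length y" "take l x = take l y" "dd p l x = dd p l y"
    "set x \<subseteq> {..<p}" "set y \<subseteq> {..<p}"
  shows "x = y"
proof (rule nth_equalityI)
  show "length x = length y" by (rule assms(2))
  have "\<forall>j. j < length x \<longrightarrow> x ! j = y ! j"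
  proof (intro allI)
    fix j show "j < length x \<longrightarrow> x ! j = y ! j"
    proof (induction j rule: less_induct)
      case (less j)
      show ?case
      proof
        assume j: "j < length x"
        show "x ! j = y ! j"
        proof (cases "j < l")
          case True
          then show ?thesis using assms(3) j by (metis nth_take)
        next
          case False
          then have jl: "j - l < length x - l" using j by simp
          have e: "x ! (j - l) = y ! (j - l)" using less.IH[of "j - l"] False j assms(1) by simp
          have "dd p l x ! (j - l) = dd p l y ! (j - l)" using assms(4) by simp
          then have "(x ! j + (p - x ! (j - l))) mod p = (y ! j + (p - x ! (j - l))) mod p"
            using jl assms(2) False e by (simp add: nth_dd)
          moreover have "x ! j < p" using j assms(5) by (meson lessThan_iff nth_mem subsetD)
          moreover have "y ! j < p" using j assms(2,6) by (metis lessThan_iff nth_mem subsetD)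
          moreover have "x ! (j - l) \<le> p" using j assms(5) False
            by (metis less_imp_le_nat lessThan_iff nth_mem subsetD less_imp_diff_less)
          ultimately show ?thesis using mod_cancel_aux by blast
        qed
      qed
    qed
  qed
  then show "\<And>j. j < length x \<Longrightarrow> x ! j = y ! j" by blast
qed



lemma realize:
  assumes "0 < l" "l \<le> length x" "set x \<subseteq> {..<p}"
  shows "length b = length (gaps (dd p l x)) \<Longrightarrow> sum_list b = t \<Longrightarrow>
    \<exists>y. (dup_step l ^^ t) x y \<and> take l y = take l x \<and> set y \<subseteq> {..<p} \<and>
        length y = length x + t * l \<and> nz (dd p l y) = nz (dd p l x) \<and>
        gaps (dd p l y) = map2 (\<lambda>g e. g + l * e) (gaps (dd p l x)) b"
proof (induction t arbitrary: b)
  case 0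
  then have "\<forall>e\<in>set b. e = 0" by simp
  then have "map2 (\<lambda>g e. g + l * e) (gaps (dd p l x)) b = gaps (dd p l x)"
    using 0 by (intro nth_equalityI) auto
  then show ?case using assms by (intro exI[of _ x]) simp
next
  case (Suc t)
  obtain k where k: "k < length b" "b ! k > 0"
  proof -
    have "\<not> (\<forall>e\<in>set b. e = 0)" using Suc.prems by (metis sum_list_eq_0_iff nat.simps(3))
    then obtain e where "e \<in> set b" "e \<noteq> 0" by blast
    then show ?thesis using that by (metis gr0I in_set_conv_nth)
  qed
  define b' where "b' = b[k := b ! k - 1]"
  have lb': "length b' = length (gaps (dd p l x))" using Suc.prems by (simp add: b'_def)
  have sb': "sum_list b' = t" using Suc.prems k unfolding b'_def by (simp add: sum_list_update)
  obtain y' where y': "(dup_step l ^^ t) x y'" "take l y' = take l x" "set y' \<subseteq> {..<p}"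
     "length y' = length x + t * l" "nz (dd p l y') = nz (dd p l x)"
     "gaps (dd p l y') = map2 (\<lambda>g e. g + l * e) (gaps (dd p l x)) b'"
    using Suc.IH[OF lb' sb'] by blast
  define s' where "s' = dd p l y'"
  have "k < length (gaps s')" unfolding s'_def using y'(5) k Suc.prems by (simp add: length_gaps)
  then obtain i where i: "i \<le> length s'" "gaps (ins l i s') = (gaps s')[k := gaps s' ! k + l]"
    using gaps_ins by blast
  have il: "i + l \<le> length y'" using i assms y'(4) by (simp add: s'_def)
  define y where "y = tdup l i y'"
  have step: "dup_step l y' y" unfolding dup_step_def y_def using il by blast
  have ddy: "dd p l y = ins l i s'" unfolding y_def s'_def using dd_tdup il y'(3) by blast
  have "gaps (dd p l y) = map2 (\<lambda>g e. g + l * e) (gaps (dd p l x)) b"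
  proof (rule nth_equalityI)
    have lbk: "l \<le> l * b ! k" using k by simp
    show "length (gaps (dd p l y)) = length (map2 (\<lambda>g e. g + l * e) (gaps (dd p l x)) b)"
      using ddy i y'(6) Suc.prems lb' by (simp add: s'_def)
  next
    have lbk: "l \<le> l * b ! k" using k by simp
    fix j assume "j < length (gaps (dd p l y))"
    then have j: "j < length b" using ddy i y'(6) Suc.prems lb' by (simp add: s'_def)
    show "gaps (dd p l y) ! j = map2 (\<lambda>g e. g + l * e) (gaps (dd p l x)) b ! j"
      using ddy i y'(6) Suc.prems j k lbk by (cases "j = k") (auto simp: s'_def b'_def algebra_simps)
  qed
  moreover have "(dup_step l ^^ Suc t) x y" using y'(1) step by (rule relpowp_Suc_I)
  moreover have "take l y = take l x" using y'(2) il take_tdup unfolding y_def by metis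
  moreover have "set y \<subseteq> {..<p}" using y'(3) set_tdup unfolding y_def by blast
  moreover have "length y = length x + Suc t * l" using il y'(4) unfolding y_def by simp
  moreover have "nz (dd p l y) = nz (dd p l x)" using ddy y'(5) nz_ins by (simp add: s'_def)
  ultimately show ?case by blast
qed



definition blocks :: "nat \<Rightarrow> nat list \<Rightarrow> nat list" where
  "blocks l s = map (\<lambda>g. g div l) (gaps s)"

definition root :: "nat \<Rightarrow> nat list \<Rightarrow> nat list" where
  "root l s = build (nz s) (map (\<lambda>g. g mod l) (gaps s))"

definition key :: "nat \<Rightarrow> nat \<Rightarrow> nat list \<Rightarrow> nat list \<times> nat \<times> nat list" where
  "key p l c = (take l c, sum_list (blocks l (dd p l c)), root l (dd p l c))"

lemma nz_root: "nz (root l s) = nz s"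
  unfolding root_def by (simp add: nz_build nz_nonzero)

lemma gaps_root: "gaps (root l s) = map (\<lambda>g. g mod l) (gaps s)"
  unfolding root_def by (simp add: gaps_build nz_nonzero length_gaps)

lemma sum_list_map2_plus: "length xs = length ys \<Longrightarrow> sum_list (map2 (+) xs ys) = sum_list xs + sum_list (ys::nat list)"
proof (induction xs arbitrary: ys)
  case (Cons a xs)
  then show ?case by (cases ys) auto
qed simp

lemma card_sum_lists: "card {b::nat list. length b = Suc r \<and> sum_list b = s} = (r + s) choose s"
  using card_length_sum_list[of "Suc r" s] by (simp add: add.commute)

lemma finite_sum_lists: "finite {b::nat list. length b = Suc r \<and> sum_list b = s}"
  by (rule card_ge_0_finite) (simp add: card_sum_lists)

lemma map2_split: "map2 (\<lambda>g e. g + l * e) G e =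
   map2 (\<lambda>\<rho> \<beta>. \<rho> + l * \<beta>) (map (\<lambda>g. g mod l) G) (map2 (+) (map (\<lambda>g. g div l) G) e)"
  for G e :: "nat list"
proof (rule nth_equalityI)
  have pt: "(g::nat) + l * e = g mod l + l * (g div l + e)" for g e :: nat
  proof -
    have h: "g mod l + l * (g div l) = g" by (rule mod_mult_div_eq)
    show ?thesis unfolding distrib_left using h by linarith
  qed
  show "length (map2 (\<lambda>g e. g + l * e) G e) = length (map2 (\<lambda>\<rho> \<beta>. \<rho> + l * \<beta>) (map (\<lambda>g. g mod l) G) (map2 (+) (map (\<lambda>g. g div l) G) e))"
    by simp
  fix i assume "i < length (map2 (\<lambda>g e. g + l * e) G e)"
  then show "map2 (\<lambda>g e. g + l * e) G e ! i = map2 (\<lambda>\<rho> \<beta>. \<rho> + l * \<beta>) (map (\<lambda>g. g mod l) G) (map2 (+) (map (\<lambda>g. g div l) G) e) ! i"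
    using pt by simp
qed

lemma class_bound:
  fixes u z :: "nat list" and w :: nat
  assumes code: "tdc_code p n l t C" and l: "0 < l" "l \<le> n"
  defines "K \<equiv> {c \<in> C. key p l c = (u, w, z)}"
  shows "card K * ((length (nz z) + t) choose t) \<le> (length (nz z) + (w + t)) choose (w + t)"
proof -
  define r where "r = length (nz z)"
  have Cw: "C \<subseteq> words p n" using code by (simp add: tdc_code_def)
  have finC: "finite C"
  proof -
    have "words p n = {xs. set xs \<subseteq> {..<p} \<and> length xs = n}" unfolding words_def by blast
    then show ?thesis using finite_subset[OF Cw] finite_lists_length_eq[of "{..<p}" n] by simp
  qed
  have finK: "finite K" unfolding K_def using finC by simp
  define Es where "Es = {e::nat list. length e = Suc r \<and> sum_list e = t}"
  define T where "T = {b::nat list. length b = Suc r \<and> sum_list b = w + t}"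
  define B where "B c = blocks l (dd p l c)" for c
  define E where "E c = (\<lambda>e. map2 (+) (B c) e) ` Es" for c
  have Kprops: "take l c = u \<and> nz (dd p l c) = nz z \<and> map (\<lambda>g. g mod l) (gaps (dd p l c)) = gaps z
     \<and> sum_list (B c) = w \<and> length (B c) = Suc r \<and> c \<in> words p n" if "c \<in> K" for c
  proof -
    have k: "key p l c = (u, w, z)" "c \<in> C" using that by (auto simp: K_def)
    then have z: "z = root l (dd p l c)" by (simp add: key_def)
    have "take l c = u" "sum_list (B c) = w" using k(1) by (simp_all add: key_def B_def)
    moreover have "nz (dd p l c) = nz z" by (simp add: z nz_root)
    moreover have "map (\<lambda>g. g mod l) (gaps (dd p l c)) = gaps z" by (simp add: z gaps_root)
    moreover have "length (B c) = Suc r"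
      by (simp add: B_def blocks_def length_gaps r_def z nz_root)
    moreover have "c \<in> words p n" using k(2) Cw by blast
    ultimately show ?thesis by blast
  qed
  have cardE: "card (E c) = (r + t) choose t" if "c \<in> K" for c
  proof -
    have "inj_on (\<lambda>e. map2 (+) (B c) e) Es"
    proof (rule inj_onI)
      fix e e' assume ee: "e \<in> Es" "e' \<in> Es" "map2 (+) (B c) e = map2 (+) (B c) e'"
      have len: "length e = Suc r" "length e' = Suc r" "length (B c) = Suc r"
        using ee Kprops[OF that] by (auto simp: Es_def)
      show "e = e'"
      proof (rule nth_equalityI)
        show "length e = length e'" using len by simp
        fix i assume i: "i < length e"
        have "map2 (+) (B c) e ! i = map2 (+) (B c) e' ! i" using ee(3) by simp
        then show "e ! i = e' ! i" using len i by simp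
      qed
    qed
    then have "card (E c) = card Es" unfolding E_def by (rule card_image)
    then show ?thesis unfolding Es_def by (simp add: card_sum_lists)
  qed
  have ET: "E c \<subseteq> T" if "c \<in> K" for c
    using Kprops[OF that] unfolding E_def Es_def T_def by (auto simp: sum_list_map2_plus)
  have disj: "E c \<inter> E c' = {}" if "c \<in> K" "c' \<in> K" "c \<noteq> c'" for c c'
  proof (rule ccontr)
    assume "E c \<inter> E c' \<noteq> {}"
    then obtain e e' where e: "e \<in> Es" "e' \<in> Es" "map2 (+) (B c) e = map2 (+) (B c') e'"
      unfolding E_def by blast
    have cw: "c \<in> words p n" "c' \<in> words p n" using Kprops that by blast+
    have lg: "length e = length (gaps (dd p l c))" "length e' = length (gaps (dd p l c'))"
      using e Kprops[OF that(1)] Kprops[OF that(2)] by (auto simp: Es_def B_def blocks_def)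
    have cl: "l \<le> length c" "set c \<subseteq> {..<p}" "l \<le> length c'" "set c' \<subseteq> {..<p}"
      using cw l by (auto simp: words_def)
    have se: "sum_list e = t" "sum_list e' = t" using e by (auto simp: Es_def)
    obtain y where y: "(dup_step l ^^ t) c y" "take l y = take l c" "set y \<subseteq> {..<p}"
        "length y = length c + t * l" "nz (dd p l y) = nz (dd p l c)"
        "gaps (dd p l y) = map2 (\<lambda>g e. g + l * e) (gaps (dd p l c)) e"
      using realize[OF l(1) cl(1) cl(2) lg(1) se(1)] by blast
    obtain y' where y': "(dup_step l ^^ t) c' y'" "take l y' = take l c'" "set y' \<subseteq> {..<p}"
        "length y' = length c' + t * l" "nz (dd p l y') = nz (dd p l c')"
        "gaps (dd p l y') = map2 (\<lambda>g e. g + l * e) (gaps (dd p l c')) e'"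
      using realize[OF l(1) cl(3) cl(4) lg(2) se(2)] by blast
    have g1: "gaps (dd p l y) = map2 (\<lambda>\<rho> \<beta>. \<rho> + l * \<beta>) (gaps z) (map2 (+) (B c) e)"
      using y(6) map2_split[of l "gaps (dd p l c)" e] Kprops[OF that(1)] by (simp add: B_def blocks_def)
    have g2: "gaps (dd p l y') = map2 (\<lambda>\<rho> \<beta>. \<rho> + l * \<beta>) (gaps z) (map2 (+) (B c') e')"
      using y'(6) map2_split[of l "gaps (dd p l c')" e'] Kprops[OF that(2)] by (simp add: B_def blocks_def)
    have "gaps (dd p l y) = gaps (dd p l y')" using g1 g2 e(3) by simp
    moreover have "nz (dd p l y) = nz (dd p l y')" using y(5) y'(5) Kprops that by metis
    ultimately have "dd p l y = dd p l y'" using gaps_nz_inj by blast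
    moreover have "take l y = take l y'" using y(2) y'(2) Kprops that by metis
    moreover have "length y = length y'" using y(4) y'(4) cw by (simp add: words_def)
    ultimately have "y = y'" using dd_inj l(1) y(3) y'(3) by blast
    then have "y \<in> dup_ball l t c \<inter> dup_ball l t c'" using y(1) y'(1) by (auto simp: dup_ball_def)
    moreover have "c \<in> C" "c' \<in> C" using that by (auto simp: K_def)
    moreover have "\<forall>c\<in>C. \<forall>c'\<in>C. c \<noteq> c' \<longrightarrow> dup_ball l t c \<inter> dup_ball l t c' = {}"
      using code by (simp add: tdc_code_def)
    ultimately show False using that(3) by blast
  qed
  have "card (\<Union>c\<in>K. E c) = (\<Sum>c\<in>K. card (E c))"
  proof (rule card_UN_disjoint)
    show "finite K" by (rule finK)
    show "\<forall>c\<in>K. finite (E c)" unfolding E_def Es_def using finite_sum_lists by blast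
    show "\<forall>c\<in>K. \<forall>c'\<in>K. c \<noteq> c' \<longrightarrow> E c \<inter> E c' = {}" using disj by blast
  qed
  also have "\<dots> = card K * ((r + t) choose t)" using cardE by simp
  finally have "card K * ((r + t) choose t) = card (\<Union>c\<in>K. E c)" by simp
  also have "\<dots> \<le> card T"
  proof (rule card_mono)
    show "finite T" unfolding T_def by (rule finite_sum_lists)
    show "(\<Union>c\<in>K. E c) \<subseteq> T" using ET by blast
  qed
  also have "\<dots> = (r + (w + t)) choose (w + t)" unfolding T_def by (rule card_sum_lists)
  finally show ?thesis unfolding r_def .
qed



lemma words_eq: "words p n = {xs. set xs \<subseteq> {..<p} \<and> length xs = n}"
  unfolding words_def by blast

lemma finite_words: "finite (words p n)"
  unfolding words_eq by (rule finite_lists_length_eq) simp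

lemma card_words: "card (words p n) = p ^ n"
  unfolding words_eq by (simp add: card_lists_length_eq)

lemma sum_list_divmod: "sum_list G = l * sum_list (map (\<lambda>g. g div l) G) + sum_list (map (\<lambda>g. g mod l) G)"
  for G :: "nat list"
proof (induction G)
  case (Cons g G)
  have "g = l * (g div l) + g mod l" by simp
  then show ?case using Cons by (simp add: distrib_left)
qed simp

lemma key_in:
  assumes "c \<in> words p n" "0 < l" "l \<le> n" "0 < p"
  shows "key p l c \<in> words p l \<times> (SIGMA w:{..<n div l}. {z \<in> words p (n - (w + 1) * l). no_zero_run l z})"
proof -
  define s where "s = dd p l c"
  define G where "G = gaps s"
  define w where "w = sum_list (map (\<lambda>g. g div l) G)"
  define z where "z = root l s"
  have lc: "length c = n" "set c \<subseteq> {..<p}" using assms(1) by (auto simp: words_def)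
  have k: "key p l c = (take l c, w, z)" by (simp add: key_def w_def G_def blocks_def z_def s_def)
  have u: "take l c \<in> words p l" using lc assms(3)
    by (auto simp: words_def dest: in_set_takeD)
  have ls: "length s = n - l" using lc by (simp add: s_def)
  have e1: "length s = length (nz s) + l * w + sum_list (map (\<lambda>g. g mod l) G)"
    using length_eq_gaps[of s] sum_list_divmod[of G l] by (simp add: G_def w_def)
  have lz: "length z = length (nz s) + sum_list (map (\<lambda>g. g mod l) G)"
    unfolding z_def root_def G_def by (rule length_build) (simp add: length_gaps)
  have "l * w + l \<le> n" using e1 ls assms(3) by linarith
  then have "(w + 1) * l \<le> n" by (simp add: algebra_simps)
  then have wlt: "w < n div l" using less_eq_div_iff_mult_less_eq[OF assms(2), of "w + 1" n] by simp
  have lz2: "length z = n - (w + 1) * l" using lz e1 ls by (simp add: algebra_simps)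
  have "set s \<subseteq> {..<p}" using assms(4) by (auto simp: s_def dd_def)
  then have "set z \<subseteq> {..<p}" using set_build[of "nz s" "map (\<lambda>g. g mod l) (gaps s)"] assms(4)
    unfolding z_def root_def nz_def by auto
  then have zw: "z \<in> words p (n - (w + 1) * l)" using lz2 by (simp add: words_def)
  have "no_zero_run l z"
    by (rule no_zero_run_gaps) (use assms(2) in \<open>auto simp: z_def gaps_root\<close>)
  then show ?thesis using k u wlt zw by simp
qed



theorem lemma3:
  fixes p n l t :: nat and C :: "nat list set"
  assumes "p \<ge> 2" and "n > 0" and "l > 0" and "t > 0" and "n \<ge> l"
    and "tdc_code p n l t C"
  shows "real (card C) \<le> real p ^ l *
    (\<Sum>w<n div l. \<Sum>r=0..n - (w + 1) * l.
       real (N_count p l (n - (w + 1) * l) r) *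
       (real ((r + w + t) choose (w + t)) / real ((r + t) choose t)))"
proof -
  define Z where "Z w = {z \<in> words p (n - (w + 1) * l). no_zero_run l z}" for w
  define S where "S = (SIGMA w:{..<n div l}. Z w)"
  define KS where "KS = words p l \<times> S"
  define F where "F w r = real ((r + w + t) choose (w + t)) / real ((r + t) choose t)" for w r
  have Cw: "C \<subseteq> words p n" using assms(6) by (simp add: tdc_code_def)
  have finC: "finite C" using finite_subset[OF Cw finite_words] .
  have finZ: "finite (Z w)" for w unfolding Z_def using finite_words by simp
  have finS: "finite S" unfolding S_def using finZ by auto
  have finKS: "finite KS" unfolding KS_def using finS finite_words by simp
  have img: "key p l ` C \<subseteq> KS"
    using key_in[OF _ assms(3) assms(5)] assms(1) Cw unfolding KS_def S_def Z_def by fastforce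
  have "real (card C) = (\<Sum>c\<in>C. 1)" by simp
  also have "\<dots> = (\<Sum>k\<in>KS. \<Sum>c\<in>{c. c \<in> C \<and> key p l c = k}. 1)"
    by (rule sum.group[OF finC finKS img, symmetric])
  also have "\<dots> \<le> (\<Sum>k\<in>KS. F (fst (snd k)) (hweight (snd (snd k))))"
  proof (rule sum_mono)
    fix k assume "k \<in> KS"
    obtain u w z where kk: "k = (u, w, z)" by (cases k) auto
    have hw: "hweight z = length (nz z)" by (simp add: hweight_def nz_def)
    have cb: "card {c \<in> C. key p l c = (u, w, z)} * ((length (nz z) + t) choose t)
       \<le> (length (nz z) + (w + t)) choose (w + t)"
      by (rule class_bound[OF assms(6) assms(3) assms(5)])
    have pos: "real ((length (nz z) + t) choose t) > 0" by simp
    have "real (card {c \<in> C. key p l c = (u, w, z)}) \<le> F w (hweight z)"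
      unfolding F_def hw using cb pos
      by (simp add: le_divide_eq add.assoc flip: of_nat_mult)
    then show "(\<Sum>c\<in>{c. c \<in> C \<and> key p l c = k}. 1) \<le> F (fst (snd k)) (hweight (snd (snd k)))"
      using kk by simp
  qed
  also have "\<dots> = (\<Sum>k\<in>words p l \<times> S. case_prod (\<lambda>u x. F (fst x) (hweight (snd x))) k)"
    unfolding KS_def by (simp add: split_def)
  also have "\<dots> = (\<Sum>u\<in>words p l. \<Sum>x\<in>S. F (fst x) (hweight (snd x)))"
    by (rule sum.cartesian_product[symmetric])
  also have "\<dots> = real p ^ l * (\<Sum>x\<in>S. F (fst x) (hweight (snd x)))"
    by (simp only: sum_constant card_words of_nat_power)
  also have "(\<Sum>x\<in>S. F (fst x) (hweight (snd x))) = (\<Sum>w<n div l. \<Sum>z\<in>Z w. F w (hweight z))"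
  proof -
    have "(\<Sum>w<n div l. \<Sum>z\<in>Z w. F w (hweight z)) = (\<Sum>x\<in>S. case_prod (\<lambda>w z. F w (hweight z)) x)"
      unfolding S_def by (rule sum.Sigma) (use finZ in auto)
    then show ?thesis by (simp add: split_def)
  qed
  also have "\<dots> = (\<Sum>w<n div l. \<Sum>r=0..n - (w + 1) * l. real (N_count p l (n - (w + 1) * l) r) * F w r)"
  proof (rule sum.cong[OF refl])
    fix w
    define m where "m = n - (w + 1) * l"
    have hwle: "hweight z \<in> {0..m}" if "z \<in> Z w" for z
    proof -
      have "hweight z \<le> length z" unfolding hweight_def by simp
      then show ?thesis using that by (simp add: Z_def words_def m_def)
    qed
    have "(\<Sum>z\<in>Z w. F w (hweight z)) = (\<Sum>r\<in>{0..m}. \<Sum>z\<in>{z. z \<in> Z w \<and> hweight z = r}. F w (hweight z))"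
      by (rule sum.group[OF finZ finite_atLeastAtMost, symmetric]) (use hwle in blast)
    also have "\<dots> = (\<Sum>r\<in>{0..m}. real (N_count p l m r) * F w r)"
    proof (rule sum.cong[OF refl])
      fix r
      have "{z. z \<in> Z w \<and> hweight z = r} = {x \<in> words p m. hweight x = r \<and> no_zero_run l x}"
        by (auto simp: Z_def m_def)
      then show "(\<Sum>z\<in>{z. z \<in> Z w \<and> hweight z = r}. F w (hweight z)) = real (N_count p l m r) * F w r"
        by (simp add: N_count_def)
    qed
    finally show "(\<Sum>z\<in>Z w. F w (hweight z)) = (\<Sum>r=0..n - (w + 1) * l. real (N_count p l (n - (w + 1) * l) r) * F w r)"
      by (simp add: m_def)
  qed
  finally show ?thesis unfolding F_def .
qed

end
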